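(* For all integers $k\geq1$, $c_{ECH}^k(E(1,2))=c_{ECH}^k(C(1))$.
   Context: For $a,b>0$, let $N_0\leq N_1\leq N_2\leq\cdots$ be the numbers $ma+nb$ with $m,n\in\mathbb{Z}_{\geq0}$ arranged in nondecreasing order with multiplicities (so $N_0=0$), and set $c_{ECH}^k(E(a,b)):=N_k$ for $k\geq0$. For the polydisc $P(a,b)$ set $c_{ECH}^k(P(a,b)):=\min\{am+bn: m,n\in\mathbb{Z}_{\geq0},\ (m+1)(n+1)\geq k+1\}$. The cube $C(1)$ is $P(1,1)$. *)

theory Defs
  imports Complex_Main
begin

text \<open>Number of pairs (m,n) of nonnegative integers with m*a + n*b <= L.
  For a,b > 0 this set is finite.\<close>
definition ell_count :: "real \<Rightarrow> real \<Rightarrow> real \<Rightarrow> nat" where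
  "ell_count a b L = card {(m::nat, n::nat). real m * a + real n * b \<le> L}"

text \<open>N_k: the k-th entry (0-indexed) of the numbers m*a+n*b arranged in
  nondecreasing order with multiplicities, i.e. the smallest attained value L
  such that more than k of the pairs (m,n) have value at most L.\<close>
definition c_ech_ellipsoid :: "nat \<Rightarrow> real \<Rightarrow> real \<Rightarrow> real" where
  "c_ech_ellipsoid k a b =
     (LEAST L. (\<exists>m n::nat. L = real m * a + real n * b) \<and> k < ell_count a b L)"

definition c_ech_polydisc :: "nat \<Rightarrow> real \<Rightarrow> real \<Rightarrow> real" where
  "c_ech_polydisc k a b =
     (LEAST L. \<exists>m n::nat. L = a * real m + b * real n \<and> (m + 1) * (n + 1) \<ge> k + 1)"

abbreviation c_ech_cube :: "nat \<Rightarrow> real \<Rightarrow> real" where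
  "c_ech_cube k c \<equiv> c_ech_polydisc k c c"

end

theory Submission
  imports Defs
begin

definition hh :: "nat \<Rightarrow> nat" where
  "hh s = (s div 2 + 1) * ((s + 1) div 2 + 1)"

lemma eqset: "{(m::nat,n::nat). m + 2*n = t} = (\<lambda>n. (t - 2*n, n)) ` {..t div 2}"
  by (auto simp: image_iff)

lemma card_eqset: "card {(m::nat,n::nat). m + 2*n = t} = t div 2 + 1"
proof -
  have "inj_on (\<lambda>n. (t - 2*n, n)) {..t div 2}" by (auto simp: inj_on_def)
  then show ?thesis unfolding eqset by (simp add: card_image)
qed

lemma fin_le: "finite {(m::nat,n::nat). m + 2*n \<le> s}"
  by (rule finite_subset[of _ "{..s} \<times> {..s}"]) auto

lemma card_le: "card {(m::nat,n::nat). m + 2*n \<le> s} = hh s"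
proof (induction s)
  case 0
  have "{(m::nat,n::nat). m + 2*n \<le> 0} = {(0,0)}" by auto
  then show ?case by (simp add: hh_def)
next
  case (Suc s)
  have u: "{(m::nat,n::nat). m + 2*n \<le> Suc s} =
     {(m::nat,n::nat). m + 2*n \<le> s} \<union> {(m::nat,n::nat). m + 2*n = Suc s}" by auto
  have f2: "finite {(m::nat,n::nat). m + 2*n = Suc s}"
    unfolding eqset by simp
  have "card {(m::nat,n::nat). m + 2*n \<le> Suc s} = hh s + (Suc s div 2 + 1)"
    unfolding u using fin_le f2 Suc card_eqset[of "Suc s"]
    by (subst card_Un_disjoint) auto
  also have "\<dots> = hh (Suc s)"
  proof (cases "even s")
    case True then obtain j where "s = 2*j" by blast
    then show ?thesis by (simp add: hh_def)
  next
    case False then obtain j where "s = 2*j+1" using oddE by blast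
    then show ?thesis by (simp add: hh_def)
  qed
  finally show ?case .
qed

lemma ell: "ell_count 1 2 (real s) = hh s"
proof -
  have "{(m::nat, n::nat). real m * 1 + real n * 2 \<le> real s} = {(m,n). m + 2*n \<le> s}"
    by (auto simp del: of_nat_add of_nat_mult simp add: of_nat_add[symmetric] of_nat_mult[symmetric])
  then show ?thesis unfolding ell_count_def using card_le by simp
qed

lemma hh_bound: "(m+1)*(n+1) \<le> hh (m+n)"
proof -
  have a: "4*((m+1)*(n+1)) \<le> (m+n+2)^2"
  proof -
    have "int (4*((m+1)*(n+1))) \<le> int ((m+n+2)^2)"
      using zero_le_power2[of "int m - int n"] by (simp add: power2_eq_square algebra_simps)
    then show ?thesis by linarith
  qed
  have b: "(m+n+2)^2 \<le> 4 * hh (m+n) + 1"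
  proof (cases "even (m+n)")
    case True then obtain j where "m+n = 2*j" by blast
    then show ?thesis by (simp add: hh_def power2_eq_square algebra_simps)
  next
    case False then obtain j where "m+n = 2*j+1" using oddE by blast
    then show ?thesis by (simp add: hh_def power2_eq_square algebra_simps)
  qed
  from a b show ?thesis by linarith
qed

lemma P1: "((\<exists>m n::nat. L = real m * 1 + real n * 2) \<and> k < ell_count 1 2 L)
   = (\<exists>s. L = real s \<and> k < hh s)"
proof
  assume "(\<exists>m n::nat. L = real m * 1 + real n * 2) \<and> k < ell_count 1 2 L"
  then obtain m n where mn: "L = real m * 1 + real n * 2" "k < ell_count 1 2 L" by auto
  then have "L = real (m + 2*n)" by simp
  then show "\<exists>s. L = real s \<and> k < hh s" using ell mn(2) by metis
next
  assume "\<exists>s. L = real s \<and> k < hh s"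
  then obtain s where "L = real s" "k < hh s" by auto
  then show "(\<exists>m n::nat. L = real m * 1 + real n * 2) \<and> k < ell_count 1 2 L"
    using ell by (metis add.right_neutral mult_1_right mult_zero_left of_nat_0)
qed

lemma P2: "(\<exists>m n::nat. L = 1 * real m + 1 * real n \<and> (m + 1) * (n + 1) \<ge> k + 1)
   = (\<exists>s. L = real s \<and> k < hh s)"
proof
  assume "\<exists>m n::nat. L = 1 * real m + 1 * real n \<and> (m + 1) * (n + 1) \<ge> k + 1"
  then obtain m n where "L = real (m+n)" "(m + 1) * (n + 1) \<ge> k + 1" by auto
  then show "\<exists>s. L = real s \<and> k < hh s" using hh_bound[of m n] by (intro exI[of _ "m+n"]) auto
next
  assume "\<exists>s. L = real s \<and> k < hh s"
  then obtain s where s: "L = real s" "k < hh s" by auto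
  have "s div 2 + (s+1) div 2 = s" by presburger
  then have "L = 1 * real (s div 2) + 1 * real ((s+1) div 2)" using s
    by (metis mult_1 of_nat_add)
  moreover have "(s div 2 + 1) * ((s+1) div 2 + 1) \<ge> k + 1" using s by (simp add: hh_def)
  ultimately show "\<exists>m n::nat. L = 1 * real m + 1 * real n \<and> (m + 1) * (n + 1) \<ge> k + 1"
    by blast
qed

theorem lemma2p6:
  fixes k :: nat
  assumes "k \<ge> 1"
  shows "c_ech_ellipsoid k 1 2 = c_ech_cube k 1"
  unfolding c_ech_ellipsoid_def c_ech_polydisc_def P1 P2 ..

end
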